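(* Let $\eta>0$, $T>0$, $\beta\in[0,+\infty]$, $\theta>0$, $v>0$. Let $u$ be any real number if $\beta=+\infty$ and $u=-v\beta$ otherwise. Write $\omega=W(\theta v\eta^2T)$ and define $k_\beta:\mathbb R\to\mathbb R$ by $$k_\beta(z)=\theta\left(u+ve^{\eta\sqrt Tz}\right)1_{z\le\frac{\ln\beta}{\eta\sqrt T}}+\frac{z^2}{2}$$ (conventions $\ln(+\infty)=+\infty$, $\ln0=-\infty$), and $$m(\beta)=\begin{cases}-\frac{\omega}{\eta\sqrt T}&\text{if }\beta\in\left[\frac1{\theta v}\left(\frac{\omega}{\eta^2T}+\frac{\omega^2}{2\eta^2T}\right),+\infty\right],\\0&\text{otherwise.}\end{cases}$$ Then $k_\beta$ attains its minimum value at $m(\beta)$. Moreover, if $\beta<+\infty$, $$k_\beta(m(\beta))=-\left(\theta v\beta-\frac{\omega}{\eta^2T}-\frac{\omega^2}{2\eta^2T}\right)_+,$$ and $$k_{+\infty}(m(+\infty))=\frac{\omega}{\eta^2T}+\frac{\omega^2}{2\eta^2T}+\theta u.$$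
   Context: The Lambert function $W$ is the inverse of the bijection $x\in(-1,+\infty)\mapsto xe^x\in(-1/e,+\infty)$; $x_+=\max(x,0)$. *)

theory Defs
  imports "HOL-Analysis.Analysis" "HOL-Library.Extended_Real"
begin

definition lambert_W :: "real \<Rightarrow> real" where
  "lambert_W y = (THE w. -1 < w \<and> w * exp w = y)"

text \<open>Indicator condition z \<le> ln \<beta> / (\<eta> sqrt T), with ln(+\<infinity>) = +\<infinity>, ln 0 = -\<infinity>.\<close>
definition below_log :: "real \<Rightarrow> real \<Rightarrow> ereal \<Rightarrow> real \<Rightarrow> bool" where
  "below_log \<eta> T \<beta> z =
     (\<beta> = \<infinity> \<or> (0 < \<beta> \<and> \<beta> \<noteq> \<infinity> \<and> z \<le> ln (real_of_ereal \<beta>) / (\<eta> * sqrt T)))"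

definition k_fun :: "real \<Rightarrow> real \<Rightarrow> real \<Rightarrow> real \<Rightarrow> real \<Rightarrow> ereal \<Rightarrow> real \<Rightarrow> real" where
  "k_fun \<eta> T \<theta> u v \<beta> z =
     \<theta> * (u + v * exp (\<eta> * sqrt T * z)) * (if below_log \<eta> T \<beta> z then 1 else 0) + z\<^sup>2 / 2"

definition m_fun :: "real \<Rightarrow> real \<Rightarrow> real \<Rightarrow> real \<Rightarrow> ereal \<Rightarrow> real" where
  "m_fun \<eta> T \<theta> v \<beta> =
     (let \<omega> = lambert_W (\<theta> * v * \<eta>\<^sup>2 * T) in
      if ereal ((1 / (\<theta> * v)) * (\<omega> / (\<eta>\<^sup>2 * T) + \<omega>\<^sup>2 / (2 * \<eta>\<^sup>2 * T))) \<le> \<beta>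
      then - \<omega> / (\<eta> * sqrt T) else 0)"

end

theory Submission
  imports Defs
begin

lemma W_prop:
  assumes y: "(y::real) > 0"
  shows "lambert_W y > 0 \<and> lambert_W y * exp (lambert_W y) = y"
proof -
  have cont: "continuous_on {0..y} (\<lambda>w. w * exp w)"
    by (intro continuous_intros)
  have "y \<le> y * exp y" using y by simp
  then obtain w where w: "0 \<le> w" "w \<le> y" "w * exp w = y"
    using IVT'[of "\<lambda>w. w * exp w" 0 y y] cont y by auto
  have wpos: "w > 0" using w y by (cases "w = 0") auto
  have pos: "w' > 0" if "-1 < w'" "w' * exp w' = y" for w'
  proof (rule ccontr)
    assume "\<not> w' > 0"
    hence "w' * exp w' \<le> 0" by (simp add: mult_nonpos_nonneg)
    thus False using that y by simp
  qed
  have uniq: "w' = w" if "-1 < w'" "w' * exp w' = y" for w'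
  proof -
    have p: "w' > 0" using pos that by blast
    show ?thesis
    proof (rule ccontr)
      assume "w' \<noteq> w"
      hence "w' < w \<or> w < w'" by linarith
      thus False
      proof
        assume "w' < w"
        hence "w' * exp w' < w * exp w"
          using p by (intro mult_strict_mono) auto
        thus False using that w by simp
      next
        assume "w < w'"
        hence "w * exp w < w' * exp w'"
          using wpos by (intro mult_strict_mono) auto
        thus False using that w by simp
      qed
    qed
  qed
  have "lambert_W y = w"
    unfolding lambert_W_def
    by (rule the_equality) (use w wpos uniq in auto)
  thus ?thesis using w wpos by simp
qed

theorem lemma4:
  fixes \<eta> T \<theta> v u :: real and \<beta> :: ereal
  assumes "\<eta> > 0" "T > 0" "\<theta> > 0" "v > 0" "\<beta> \<ge> 0"
    and "\<beta> \<noteq> \<infinity> \<Longrightarrow> u = - v * real_of_ereal \<beta>"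
  defines "\<omega> \<equiv> lambert_W (\<theta> * v * \<eta>\<^sup>2 * T)"
  shows "(\<forall>z. k_fun \<eta> T \<theta> u v \<beta> (m_fun \<eta> T \<theta> v \<beta>) \<le> k_fun \<eta> T \<theta> u v \<beta> z)
    \<and> (\<beta> \<noteq> \<infinity> \<longrightarrow> k_fun \<eta> T \<theta> u v \<beta> (m_fun \<eta> T \<theta> v \<beta>) =
          - max (\<theta> * v * real_of_ereal \<beta> - \<omega> / (\<eta>\<^sup>2 * T) - \<omega>\<^sup>2 / (2 * \<eta>\<^sup>2 * T)) 0)
    \<and> (\<beta> = \<infinity> \<longrightarrow> k_fun \<eta> T \<theta> u v \<beta> (m_fun \<eta> T \<theta> v \<beta>) =
          \<omega> / (\<eta>\<^sup>2 * T) + \<omega>\<^sup>2 / (2 * \<eta>\<^sup>2 * T) + \<theta> * u)"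
proof -
  define a where "a = \<eta> * sqrt T"
  define c where "c = \<theta> * v"
  have apos: "a > 0" using assms unfolding a_def by simp
  have cpos: "c > 0" using assms unfolding c_def by simp
  have a2: "\<eta>\<^sup>2 * T = a\<^sup>2" using assms unfolding a_def by (simp add: power_mult_distrib)
  have a2': "2 * \<eta>\<^sup>2 * T = 2 * a\<^sup>2" using a2 by (simp add: mult.assoc)
  have yp: "\<theta> * v * \<eta>\<^sup>2 * T > 0" using assms by simp
  have W: "\<omega> > 0" "\<omega> * exp \<omega> = c * a\<^sup>2"
    using W_prop[OF yp] a2 unfolding \<omega>_def c_def
    by (simp_all add: mult.assoc)
  have cexp: "c * exp (-\<omega>) = \<omega> / a\<^sup>2"
    using W apos by (simp add: exp_minus field_simps)
  define Q where "Q = \<omega> / a\<^sup>2 + \<omega>\<^sup>2 / (2 * a\<^sup>2)"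
  have Qpos: "Q > 0" using W apos unfolding Q_def by (intro add_pos_pos divide_pos_pos) auto
  define G where "G z = c * exp (a * z) + z\<^sup>2 / 2" for z
  have Gm: "G (-\<omega>/a) = Q"
    unfolding G_def Q_def using apos cexp by (simp add: power_divide)
  have Gmin: "G z \<ge> Q" for z
  proof -
    have e: "exp (a * z + \<omega>) \<ge> 1 + (a * z + \<omega>)" by (rule exp_ge_add_one_self)
    have "exp (a * z) = exp (-\<omega>) * exp (a * z + \<omega>)" by (simp add: exp_add[symmetric])
    hence "c * exp (a * z) \<ge> c * exp (-\<omega>) * (1 + (a * z + \<omega>))"
      using e cpos by (simp add: mult.assoc)
    hence h1: "c * exp (a * z) \<ge> \<omega> / a\<^sup>2 * (1 + (a * z + \<omega>))" using cexp by simp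
    have h2: "(z + \<omega>/a)\<^sup>2 / 2 \<ge> 0" by simp
    have "G z - Q \<ge> \<omega> / a\<^sup>2 * (1 + (a * z + \<omega>)) + z\<^sup>2/2 - Q"
      using h1 unfolding G_def by simp
    also have "\<omega> / a\<^sup>2 * (1 + (a * z + \<omega>)) + z\<^sup>2/2 - Q = (z + \<omega>/a)\<^sup>2 / 2"
      unfolding Q_def using apos by (simp add: field_simps power2_eq_square)
    finally show ?thesis using h2 by linarith
  qed
  have kdef: "k_fun \<eta> T \<theta> u v \<beta> z =
      (if below_log \<eta> T \<beta> z then \<theta> * u + G z else z\<^sup>2/2)" for z
    unfolding k_fun_def G_def a_def c_def by (simp add: algebra_simps)
  have mdef: "m_fun \<eta> T \<theta> v \<beta> = (if ereal (Q / c) \<le> \<beta> then -\<omega>/a else 0)"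
  proof -
    have e: "(1 / (\<theta> * v)) * (\<omega> / (\<eta>\<^sup>2 * T) + \<omega>\<^sup>2 / (2 * \<eta>\<^sup>2 * T)) = Q / c"
      unfolding Q_def c_def a2[symmetric] by (simp add: field_simps)
    show ?thesis
      unfolding m_fun_def Let_def \<omega>_def[symmetric] e by (simp add: a_def)
  qed
  have Qc: "Q / c < 1"
  proof -
    have c2: "c = \<omega> * exp \<omega> / a\<^sup>2" using W apos by simp
    have "1 + \<omega>/2 < exp \<omega>" using W exp_ge_add_one_self[of \<omega>] by linarith
    hence "\<omega> / a\<^sup>2 * (1 + \<omega>/2) < \<omega> / a\<^sup>2 * exp \<omega>"
      using W apos by (intro mult_strict_left_mono) auto
    hence "Q < c" unfolding Q_def c2 using apos by (simp add: field_simps power2_eq_square)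
    thus ?thesis using cpos by simp
  qed
  show ?thesis
  proof (cases "\<beta> = \<infinity>")
    case True
    have bl: "below_log \<eta> T \<beta> z" for z using True unfolding below_log_def by simp
    have m: "m_fun \<eta> T \<theta> v \<beta> = -\<omega>/a" using True mdef by simp
    show ?thesis using True Gmin Gm unfolding kdef m using bl
      by (simp add: Q_def a2)
  next
    case False
    then obtain b where b: "\<beta> = ereal b" "b \<ge> 0" using assms(5)
      by (cases \<beta>) auto
    have u: "\<theta> * u = - c * b" using assms(6) False b unfolding c_def by simp
    show ?thesis
    proof (cases "Q / c \<le> b")
      case True
      have m: "m_fun \<eta> T \<theta> v \<beta> = -\<omega>/a" using True mdef b by simp
      have bpos: "b > 0" using True Qpos cpos by (smt (verit) divide_pos_pos)
      have QcB: "Q \<le> c * b" using True cpos by (simp add: field_simps)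
      have "\<omega>\<^sup>2 / (2 * a\<^sup>2) \<ge> 0" by simp
      hence "c * exp (-\<omega>) \<le> Q" unfolding cexp Q_def by linarith
      hence "c * exp (-\<omega>) \<le> c * b" using QcB by linarith
      hence "exp (-\<omega>) \<le> b" using cpos by simp
      hence "-\<omega> \<le> ln b" using bpos by (simp add: ln_ge_iff)
      hence "-\<omega>/a \<le> ln b / a" using apos divide_right_mono[of "-\<omega>" "ln b" a] by simp
      hence blm: "below_log \<eta> T \<beta> (-\<omega>/a)"
        unfolding below_log_def b a_def using bpos by simp
      have km: "k_fun \<eta> T \<theta> u v \<beta> (-\<omega>/a) = Q - c * b"
        using blm Gm u kdef by simp
      have all: "Q - c * b \<le> k_fun \<eta> T \<theta> u v \<beta> z" for z
      proof -
        have z2: "z\<^sup>2/2 \<ge> 0" by simp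
        show ?thesis
        proof (cases "below_log \<eta> T \<beta> z")
          case True
          thus ?thesis using Gmin[of z] u QcB kdef[of z] by simp
        next
          case False
          hence "k_fun \<eta> T \<theta> u v \<beta> z = z\<^sup>2/2" using kdef[of z] by simp
          thus ?thesis using z2 QcB by linarith
        qed
      qed
      show ?thesis using km all m b QcB unfolding Q_def a2 a2' c_def
        by (auto simp: max_def)
    next
      case False
      have m: "m_fun \<eta> T \<theta> v \<beta> = 0" using False mdef b by simp
      have b1: "b < 1" using False Qc by linarith
      have nbl: "\<not> below_log \<eta> T \<beta> 0"
      proof
        assume "below_log \<eta> T \<beta> 0"
        hence "b > 0" "0 \<le> ln b / (\<eta> * sqrt T)" unfolding below_log_def b by auto
        moreover have "ln b < 0" using b1 \<open>b > 0\<close> by simp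
        ultimately show False using assms by (simp add: divide_less_0_iff le_divide_eq)
      qed
      have k0: "k_fun \<eta> T \<theta> u v \<beta> 0 = 0" using nbl kdef by simp
      have QcB: "c * b < Q" using False cpos by (simp add: field_simps)
      have all: "0 \<le> k_fun \<eta> T \<theta> u v \<beta> z" for z
      proof -
        have z2: "z\<^sup>2/2 \<ge> 0" by simp
        show ?thesis
        proof (cases "below_log \<eta> T \<beta> z")
          case True
          thus ?thesis using Gmin[of z] u QcB kdef[of z] by simp
        next
          case False
          hence "k_fun \<eta> T \<theta> u v \<beta> z = z\<^sup>2/2" using kdef[of z] by simp
          thus ?thesis using z2 QcB by linarith
        qed
      qed
      show ?thesis using k0 all m b QcB unfolding Q_def a2 a2' c_def
        by (auto simp: max_def)
    qed
  qed
qed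

end
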